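(* Let $G$ be a group with weak paradoxical towers. Then $G$ is not amenable.
   Context: For $n\in\mathbb N$, a group $G$ has weak $n$-paradoxical towers if for every $m\in\mathbb N$ there exist a finite subset $D\subseteq G$ with $|D|\ge m$, subsets $K_1,\dots,K_n\subseteq G$ and elements $g_1,\dots,g_n\in G$ such that for each $j$ the sets $\{dK_j\}_{d\in D}$ are pairwise disjoint, and $\bigcup_{j=1}^n g_jK_j=G$. $G$ has weak paradoxical towers if it has weak $n$-paradoxical towers for some $n$. *)

theory Defs
  imports Complex_Main "HOL-Algebra.Coset"
begin

text \<open>Weak n-paradoxical towers (indices j range over {0..<n} instead of {1..n}).
  Left translates d K are the left cosets d <# K.\<close>
definition weak_n_paradoxical_towers :: "('a, 'b) monoid_scheme \<Rightarrow> nat \<Rightarrow> bool" where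
  "weak_n_paradoxical_towers G n \<longleftrightarrow>
     (\<forall>m::nat. \<exists>D K g.
        finite D \<and> D \<subseteq> carrier G \<and> card D \<ge> m \<and>
        (\<forall>j<n. K j \<subseteq> carrier G) \<and> (\<forall>j<n. g j \<in> carrier G) \<and>
        (\<forall>j<n. \<forall>d\<in>D. \<forall>d'\<in>D. d \<noteq> d' \<longrightarrow> (d <#\<^bsub>G\<^esub> K j) \<inter> (d' <#\<^bsub>G\<^esub> K j) = {}) \<and>
        (\<Union>j<n. g j <#\<^bsub>G\<^esub> K j) = carrier G)"

definition weak_paradoxical_towers :: "('a, 'b) monoid_scheme \<Rightarrow> bool" where
  "weak_paradoxical_towers G \<longleftrightarrow> (\<exists>n. weak_n_paradoxical_towers G n)"

definition amenable :: "('a, 'b) monoid_scheme \<Rightarrow> bool" where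
  "amenable G \<longleftrightarrow>
     (\<exists>\<mu> :: 'a set \<Rightarrow> real.
        (\<forall>A. A \<subseteq> carrier G \<longrightarrow> \<mu> A \<ge> 0) \<and>
        \<mu> (carrier G) = 1 \<and>
        (\<forall>A B. A \<subseteq> carrier G \<longrightarrow> B \<subseteq> carrier G \<longrightarrow> A \<inter> B = {} \<longrightarrow> \<mu> (A \<union> B) = \<mu> A + \<mu> B) \<and>
        (\<forall>g A. g \<in> carrier G \<longrightarrow> A \<subseteq> carrier G \<longrightarrow> \<mu> (g <#\<^bsub>G\<^esub> A) = \<mu> A))"

end

theory Submission
  imports Defs
begin

locale fa_meas =
  fixes C :: "'a set" and \<mu> :: "'a set \<Rightarrow> real"
  assumes nonneg: "\<And>A. A \<subseteq> C \<Longrightarrow> \<mu> A \<ge> 0"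
    and add: "\<And>A B. A \<subseteq> C \<Longrightarrow> B \<subseteq> C \<Longrightarrow> A \<inter> B = {} \<Longrightarrow> \<mu> (A \<union> B) = \<mu> A + \<mu> B"
begin

lemma mono: assumes "A \<subseteq> B" "B \<subseteq> C" shows "\<mu> A \<le> \<mu> B"
proof -
  have "B = A \<union> (B - A)" using assms by auto
  then have "\<mu> B = \<mu> A + \<mu> (B - A)" using add[of A "B - A"] assms by auto
  moreover have "\<mu> (B - A) \<ge> 0" using nonneg[of "B - A"] assms by blast
  ultimately show ?thesis by simp
qed

lemma subadd2: assumes "A \<subseteq> C" "B \<subseteq> C" shows "\<mu> (A \<union> B) \<le> \<mu> A + \<mu> B"
proof -
  have "A \<union> B = A \<union> (B - A)" by auto
  then have "\<mu> (A \<union> B) = \<mu> A + \<mu> (B - A)" using add[of A "B - A"] assms by auto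
  moreover have "\<mu> (B - A) \<le> \<mu> B" using mono assms by auto
  ultimately show ?thesis by simp
qed

lemma meas_empty: "\<mu> {} = 0"
  using add[of "{}" "{}"] by simp

lemma subadd: "finite I \<Longrightarrow> (\<And>i. i \<in> I \<Longrightarrow> A i \<subseteq> C) \<Longrightarrow> \<mu> (\<Union>i\<in>I. A i) \<le> (\<Sum>i\<in>I. \<mu> (A i))"
proof (induction I rule: finite_induct)
  case empty then show ?case by (simp add: meas_empty)
next
  case (insert x F)
  have "\<mu> (\<Union>i\<in>insert x F. A i) = \<mu> (A x \<union> (\<Union>i\<in>F. A i))" by simp
  also have "\<dots> \<le> \<mu> (A x) + \<mu> (\<Union>i\<in>F. A i)" using insert by (intro subadd2) auto
  also have "\<dots> \<le> \<mu> (A x) + (\<Sum>i\<in>F. \<mu> (A i))" using insert by auto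
  finally show ?case using insert by simp
qed

lemma disj: "finite I \<Longrightarrow> (\<And>i. i \<in> I \<Longrightarrow> A i \<subseteq> C) \<Longrightarrow>
   (\<And>i j. i \<in> I \<Longrightarrow> j \<in> I \<Longrightarrow> i \<noteq> j \<Longrightarrow> A i \<inter> A j = {}) \<Longrightarrow>
   \<mu> (\<Union>i\<in>I. A i) = (\<Sum>i\<in>I. \<mu> (A i))"
proof (induction I rule: finite_induct)
  case empty then show ?case by (simp add: meas_empty)
next
  case (insert x F)
  have "\<mu> (\<Union>i\<in>insert x F. A i) = \<mu> (A x \<union> (\<Union>i\<in>F. A i))" by simp
  also have "\<dots> = \<mu> (A x) + \<mu> (\<Union>i\<in>F. A i)" using insert.prems insert.hyps
    by (intro add) fastforce+
  also have "\<dots> = \<mu> (A x) + (\<Sum>i\<in>F. \<mu> (A i))" using insert by auto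
  finally show ?case using insert by simp
qed

end

theorem lemma3p11:
  assumes "group G" and "weak_paradoxical_towers G"
  shows "\<not> amenable G"
proof
  assume "amenable G"
  then obtain \<mu> :: "'a set \<Rightarrow> real" where
    nn: "\<forall>A. A \<subseteq> carrier G \<longrightarrow> \<mu> A \<ge> 0" and one: "\<mu> (carrier G) = 1" and
    ad: "\<forall>A B. A \<subseteq> carrier G \<longrightarrow> B \<subseteq> carrier G \<longrightarrow> A \<inter> B = {} \<longrightarrow> \<mu> (A \<union> B) = \<mu> A + \<mu> B" and
    inv: "\<forall>g A. g \<in> carrier G \<longrightarrow> A \<subseteq> carrier G \<longrightarrow> \<mu> (g <#\<^bsub>G\<^esub> A) = \<mu> A"
    unfolding amenable_def by blast
  interpret M: fa_meas "carrier G" \<mu> using nn ad by unfold_locales auto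
  interpret group G by fact
  obtain n where wn: "weak_n_paradoxical_towers G n" using assms(2) weak_paradoxical_towers_def by blast
  have "\<exists>D K g. finite D \<and> D \<subseteq> carrier G \<and> card D \<ge> n + 1 \<and>
        (\<forall>j<n. K j \<subseteq> carrier G) \<and> (\<forall>j<n. g j \<in> carrier G) \<and>
        (\<forall>j<n. \<forall>d\<in>D. \<forall>d'\<in>D. d \<noteq> d' \<longrightarrow> (d <#\<^bsub>G\<^esub> K j) \<inter> (d' <#\<^bsub>G\<^esub> K j) = {}) \<and>
        (\<Union>j<n. g j <#\<^bsub>G\<^esub> K j) = carrier G"
    using wn unfolding weak_n_paradoxical_towers_def by (rule spec)
  then obtain D K g where H: "finite D \<and> D \<subseteq> carrier G \<and> card D \<ge> n + 1 \<and>
        (\<forall>j<n. K j \<subseteq> carrier G) \<and> (\<forall>j<n. g j \<in> carrier G) \<and>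
        (\<forall>j<n. \<forall>d\<in>D. \<forall>d'\<in>D. d \<noteq> d' \<longrightarrow> (d <#\<^bsub>G\<^esub> K j) \<inter> (d' <#\<^bsub>G\<^esub> K j) = {}) \<and>
        (\<Union>j<n. g j <#\<^bsub>G\<^esub> K j) = carrier G"
    by (elim exE) (rule that)
  have D: "finite D" "D \<subseteq> carrier G" "card D \<ge> n + 1" and
    K: "\<forall>j<n. K j \<subseteq> carrier G" and gc: "\<forall>j<n. g j \<in> carrier G" and
    dj: "\<forall>j<n. \<forall>d\<in>D. \<forall>d'\<in>D. d \<noteq> d' \<longrightarrow> (d <#\<^bsub>G\<^esub> K j) \<inter> (d' <#\<^bsub>G\<^esub> K j) = {}" and
    cov: "(\<Union>j<n. g j <#\<^bsub>G\<^esub> K j) = carrier G"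
    by (insert H; elim conjE; assumption)+
  have bnd: "\<mu> (K j) \<le> 1 / real (n + 1)" if j: "j < n" for j
  proof -
    have sub: "\<And>d. d \<in> D \<Longrightarrow> d <#\<^bsub>G\<^esub> K j \<subseteq> carrier G"
      using D K j l_coset_subset_G by blast
    have "(\<Sum>d\<in>D. \<mu> (d <#\<^bsub>G\<^esub> K j)) = \<mu> (\<Union>d\<in>D. d <#\<^bsub>G\<^esub> K j)"
      using dj j sub D by (intro M.disj[symmetric]) auto
    also have "\<dots> \<le> 1" using one UN_least[of D "\<lambda>d. d <#\<^bsub>G\<^esub> K j" "carrier G", OF sub] M.mono[of "\<Union>d\<in>D. d <#\<^bsub>G\<^esub> K j" "carrier G"] by simp
    finally have "(\<Sum>d\<in>D. \<mu> (d <#\<^bsub>G\<^esub> K j)) \<le> 1" .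
    moreover have "(\<Sum>d\<in>D. \<mu> (d <#\<^bsub>G\<^esub> K j)) = real (card D) * \<mu> (K j)"
    proof -
      have "(\<Sum>d\<in>D. \<mu> (d <#\<^bsub>G\<^esub> K j)) = (\<Sum>d\<in>D. \<mu> (K j))"
        using inv D K j by (intro sum.cong) blast+
      then show ?thesis by simp
    qed
    ultimately have "real (card D) * \<mu> (K j) \<le> 1" by simp
    moreover have "real (n+1) \<le> real (card D)" using D by simp
    moreover have "\<mu> (K j) \<ge> 0" using nn K j by auto
    ultimately have "real (n+1) * \<mu> (K j) \<le> 1"
      by (meson mult_right_mono order_trans)
    then show ?thesis by (simp add: field_simps)
  qed
  have "1 = \<mu> (\<Union>j<n. g j <#\<^bsub>G\<^esub> K j)" using cov one by simp
  also have "\<dots> \<le> (\<Sum>j<n. \<mu> (g j <#\<^bsub>G\<^esub> K j))"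
    using K gc l_coset_subset_G by (intro M.subadd) auto
  also have "\<dots> = (\<Sum>j<n. \<mu> (K j))" using inv K gc by (intro sum.cong) auto
  also have "\<dots> \<le> (\<Sum>j<n. 1 / real (n+1))" using bnd by (intro sum_mono) auto
  also have "\<dots> = real n / real (n+1)" by simp
  also have "\<dots> < 1" by simp
  finally show False by simp
qed

end
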